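(* Let $P$ be a $3$-nice twisted $n$-gon with corner invariants $(x_0,\dots,x_{2n-1})$ (indices taken modulo $2n$), and let $P'$ be the twisted $n$-gon defined by $P'_i=P_{i-2}P_{i+1}\cap P_{i-1}P_{i+2}$, with corner invariants $(x'_0,\dots,x'_{2n-1})$. Then, whenever all quantities involved are finite and the denominators are nonzero, for every $i$: $$x'_{2i}=x_{2i-2}\cdot\frac{x_{2i-4}+x_{2i-1}-1}{x_{2i-2}x_{2i-1}-(1-x_{2i+1})(1-x_{2i-4})},\qquad x'_{2i+1}=x_{2i+3}\cdot\frac{x_{2i+2}+x_{2i+5}-1}{x_{2i+2}x_{2i+3}-(1-x_{2i+5})(1-x_{2i})}.$$
   Context: A twisted $n$-gon is a map $P:\mathbb{Z}\to\mathbb{RP}^2$ with every three consecutive points non-collinear and $P_{i+n}=M(P_i)$ for a fixed $M\in\mathrm{PGL}_3(\mathbb{R})$. $P$ is $3$-nice if $P_i,P_{i+1},P_{i+3},P_{i+4}$ are in general position for every $i$. $XY$ denotes the line through $X$ and $Y$. (The map $P\mapsto P'$ is the deep diagonal map $T_3$ with an index shift.) Inverse cross ratio: for four collinear points $A,B,C,D$, map their line projectively to the $x$-axis with coordinates $a,b,c,d$ and set $\chi(A,B,C,D)=\frac{(a-b)(c-d)}{(a-c)(b-d)}$ (value in $\mathbb{R}\cup\{\infty\}$, projectively invariant). Corner invariants: $x_{2i}=\chi(P_{i-2},P_{i-1},P_{i-2}P_{i-1}\cap P_iP_{i+1},P_{i-2}P_{i-1}\cap P_{i+1}P_{i+2})$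 and $x_{2i+1}=\chi(P_{i+2},P_{i+1},P_{i+2}P_{i+1}\cap P_iP_{i-1},P_{i+2}P_{i+1}\cap P_{i-1}P_{i-2})$, with $x_{j+2n}=x_j$. *)

theory Defs
  imports "HOL-Analysis.Analysis"
begin

text \<open>Points of RP^2 are represented by nonzero vectors of real^3 (homogeneous coordinates).
  Lines are represented by their normal vectors; the line through X and Y is cross3 X Y,
  and the intersection point of two lines L1, L2 is cross3 L1 L2.\<close>

definition proj_collinear :: "real^3 \<Rightarrow> real^3 \<Rightarrow> real^3 \<Rightarrow> bool" where
  "proj_collinear a b c \<longleftrightarrow> (cross3 a b) \<bullet> c = 0"

definition line_through :: "real^3 \<Rightarrow> real^3 \<Rightarrow> real^3" where
  "line_through X Y = cross3 X Y"

definition meet :: "real^3 \<Rightarrow> real^3 \<Rightarrow> real^3 \<Rightarrow> real^3 \<Rightarrow> real^3" where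
  "meet A B C D = cross3 (line_through A B) (line_through C D)"

definition twisted_ngon :: "nat \<Rightarrow> (int \<Rightarrow> real^3) \<Rightarrow> bool" where
  "twisted_ngon n P \<longleftrightarrow> n > 0 \<and> (\<forall>i. P i \<noteq> 0) \<and>
     (\<forall>i. \<not> proj_collinear (P i) (P (i+1)) (P (i+2))) \<and>
     (\<exists>M::real^3^3. invertible M \<and> (\<forall>i. \<exists>c::real. c \<noteq> 0 \<and> P (i + int n) = c *\<^sub>R (M *v P i)))"

definition general_position4 :: "real^3 \<Rightarrow> real^3 \<Rightarrow> real^3 \<Rightarrow> real^3 \<Rightarrow> bool" where
  "general_position4 A B C D \<longleftrightarrow> A \<noteq> 0 \<and> B \<noteq> 0 \<and> C \<noteq> 0 \<and> D \<noteq> 0 \<and>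
     \<not> proj_collinear A B C \<and> \<not> proj_collinear A B D \<and>
     \<not> proj_collinear A C D \<and> \<not> proj_collinear B C D"

definition three_nice :: "(int \<Rightarrow> real^3) \<Rightarrow> bool" where
  "three_nice P \<longleftrightarrow> (\<forall>i. general_position4 (P i) (P (i+1)) (P (i+3)) (P (i+4)))"

text \<open>Inverse cross ratio of four collinear points. For collinear A,B,C,D all the cross products
  below are multiples of the common line's normal, and the quotient equals
  (a-b)(c-d)/((a-c)(b-d)) in any affine coordinate on the line. The value is finite iff
  chi_den A B C D \<noteq> 0.\<close>
definition chi_num :: "real^3 \<Rightarrow> real^3 \<Rightarrow> real^3 \<Rightarrow> real^3 \<Rightarrow> real" where
  "chi_num A B C D = (cross3 A B) \<bullet> (cross3 C D)"

definition chi_den :: "real^3 \<Rightarrow> real^3 \<Rightarrow> real^3 \<Rightarrow> real^3 \<Rightarrow> real" where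
  "chi_den A B C D = (cross3 A C) \<bullet> (cross3 B D)"

definition chi :: "real^3 \<Rightarrow> real^3 \<Rightarrow> real^3 \<Rightarrow> real^3 \<Rightarrow> real" where
  "chi A B C D = chi_num A B C D / chi_den A B C D"

definition corner_pts :: "(int \<Rightarrow> real^3) \<Rightarrow> int \<Rightarrow> (real^3, (real^3, (real^3, real^3) prod) prod) prod" where
  "corner_pts P j = (let i = j div 2 in
     if even j then
       (P (i-2), P (i-1), meet (P (i-2)) (P (i-1)) (P i) (P (i+1)),
                          meet (P (i-2)) (P (i-1)) (P (i+1)) (P (i+2)))
     else
       (P (i+2), P (i+1), meet (P (i+2)) (P (i+1)) (P i) (P (i-1)),
                          meet (P (i+2)) (P (i+1)) (P (i-1)) (P (i-2))))"

definition corner :: "(int \<Rightarrow> real^3) \<Rightarrow> int \<Rightarrow> real" where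
  "corner P j = (case corner_pts P j of (A,B,C,D) \<Rightarrow> chi A B C D)"

definition corner_finite :: "(int \<Rightarrow> real^3) \<Rightarrow> int \<Rightarrow> bool" where
  "corner_finite P j = (case corner_pts P j of (A,B,C,D) \<Rightarrow> chi_den A B C D \<noteq> 0)"

definition T3 :: "(int \<Rightarrow> real^3) \<Rightarrow> int \<Rightarrow> real^3" where
  "T3 P i = meet (P (i-2)) (P (i+1)) (P (i-1)) (P (i+2))"

end

theory Submission
  imports Defs
begin

definition D3 :: "real^3 \<Rightarrow> real^3 \<Rightarrow> real^3 \<Rightarrow> real" where "D3 a b c = cross3 a b \<bullet> c"
definition dt :: "real\<Rightarrow>real\<Rightarrow>real\<Rightarrow>real\<Rightarrow>real\<Rightarrow>real\<Rightarrow>real\<Rightarrow>real\<Rightarrow>real\<Rightarrow>real" where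
"dt a1 a2 a3 b1 b2 b3 c1 c2 c3 = a1*(b2*c3-b3*c2) - a2*(b1*c3-b3*c1) + a3*(b1*c2-b2*c1)"

lemma meet_eq1: "meet A B X Y = D3 X Y A *\<^sub>R B - D3 X Y B *\<^sub>R A"
  unfolding meet_def line_through_def D3_def by (simp add: cross3_simps forall_3)
lemma meet_eq2: "meet A B X Y = D3 A B Y *\<^sub>R X - D3 A B X *\<^sub>R Y"
  unfolding meet_def line_through_def D3_def by (simp add: cross3_simps forall_3)
lemma cross_comb: "cross3 (a1 *\<^sub>R U + a2 *\<^sub>R V) (b1 *\<^sub>R U + b2 *\<^sub>R V) = (a1*b2-a2*b1) *\<^sub>R cross3 U V"
  by (simp add: cross3_simps forall_3)
lemma D3_comb:
  assumes "q = q1 *\<^sub>R B1 + q2 *\<^sub>R B2 + q3 *\<^sub>R B3" "r = r1 *\<^sub>R B1 + r2 *\<^sub>R B2 + r3 *\<^sub>R B3"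
    "s = s1 *\<^sub>R B1 + s2 *\<^sub>R B2 + s3 *\<^sub>R B3"
  shows "D3 q r s = dt q1 q2 q3 r1 r2 r3 s1 s2 s3 * D3 B1 B2 B3"
  unfolding assms D3_def dt_def by (simp add: cross3_simps)

lemma cramer0: "D3 B1 B2 B3 *\<^sub>R q = D3 q B2 B3 *\<^sub>R B1 + D3 B1 q B3 *\<^sub>R B2 + D3 B1 B2 q *\<^sub>R B3"
  unfolding D3_def by (simp add: cross3_simps forall_3)

lemma cramer: assumes "D3 B1 B2 B3 \<noteq> 0"
  shows "q = (D3 q B2 B3 / D3 B1 B2 B3) *\<^sub>R B1 + (D3 B1 q B3 / D3 B1 B2 B3) *\<^sub>R B2 + (D3 B1 B2 q / D3 B1 B2 B3) *\<^sub>R B3"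
proof -
  have "q = (1/D3 B1 B2 B3) *\<^sub>R (D3 B1 B2 B3 *\<^sub>R q)" using assms by simp
  also have "\<dots> = (D3 q B2 B3 / D3 B1 B2 B3) *\<^sub>R B1 + (D3 B1 q B3 / D3 B1 B2 B3) *\<^sub>R B2 + (D3 B1 B2 q / D3 B1 B2 B3) *\<^sub>R B3" by (subst cramer0[of B1 B2 B3 q]) (simp add: scaleR_add_right)
  finally show ?thesis .
qed

lemma chi_comb:
  assumes "A = a1 *\<^sub>R U + a2 *\<^sub>R V" "B = b1 *\<^sub>R U + b2 *\<^sub>R V"
    "C = c1 *\<^sub>R U + c2 *\<^sub>R V" "D = d1 *\<^sub>R U + d2 *\<^sub>R V"
  shows "chi_num A B C D = (a1*b2-a2*b1)*(c1*d2-c2*d1)*(cross3 U V \<bullet> cross3 U V)"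
    "chi_den A B C D = (a1*c2-a2*c1)*(b1*d2-b2*d1)*(cross3 U V \<bullet> cross3 U V)"
  unfolding chi_num_def chi_den_def assms cross_comb by simp_all

definition xf :: "real^3 \<Rightarrow> real^3 \<Rightarrow> real^3 \<Rightarrow> real^3 \<Rightarrow> real^3 \<Rightarrow> real^3 \<Rightarrow> real" where
  "xf A B X Y X' Y' = (D3 X Y A * D3 X' Y' B - D3 X Y B * D3 X' Y' A) / (D3 X Y A * D3 X' Y' B)"

lemma cancel_aux: "(n::real) \<noteq> 0 \<Longrightarrow> (1 * 1 - 0 * 0) * (- c * d - e * - f) * n / ((1 * e - 0 * - c) * (0 * d - 1 * - f) * n) = (e*f - c*d)/(e*f)"
proof -
  assume n: "n \<noteq> 0"
  have 1: "(1 * 1 - 0 * 0) * (- c * d - e * - f) * n = (e*f - c*d) * n" by (simp add: algebra_simps)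
  have 2: "(1 * e - 0 * - c) * (0 * d - 1 * - f) * n = (e*f) * n" by (simp add: algebra_simps)
  show ?thesis unfolding 1 2 using n by (rule mult_divide_mult_cancel_right)
qed

lemma chi_meet:
  assumes "chi_den A B (meet A B X Y) (meet A B X' Y') \<noteq> 0"
  shows "chi A B (meet A B X Y) (meet A B X' Y') = xf A B X Y X' Y'"
    "D3 X Y A \<noteq> 0" "D3 X' Y' B \<noteq> 0"
proof -
  have e: "A = 1 *\<^sub>R A + 0 *\<^sub>R B" "B = 0 *\<^sub>R A + 1 *\<^sub>R B"
    "meet A B X Y = (- D3 X Y B) *\<^sub>R A + D3 X Y A *\<^sub>R B"
    "meet A B X' Y' = (- D3 X' Y' B) *\<^sub>R A + D3 X' Y' A *\<^sub>R B"
    by (simp_all add: meet_eq1)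
  note n = chi_comb[OF e(1) e(2) e(3) e(4)]
  from assms show "D3 X Y A \<noteq> 0" "D3 X' Y' B \<noteq> 0" unfolding n by auto
  from assms have "cross3 A B \<bullet> cross3 A B \<noteq> 0" unfolding n by auto
  then show "chi A B (meet A B X Y) (meet A B X' Y') = xf A B X Y X' Y'"
    unfolding chi_def n xf_def by (rule cancel_aux)
qed

lemma corner_even:
  assumes "corner_finite P (2*k)"
  shows "corner P (2*k) = xf (P(k-2)) (P(k-1)) (P k) (P(k+1)) (P(k+1)) (P(k+2))"
    "D3 (P k) (P(k+1)) (P(k-2)) \<noteq> 0" "D3 (P(k+1)) (P(k+2)) (P(k-1)) \<noteq> 0"
proof -
  have cp: "corner_pts P (2*k) = (P(k-2), P(k-1), meet (P(k-2)) (P(k-1)) (P k) (P(k+1)),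
        meet (P(k-2)) (P(k-1)) (P(k+1)) (P(k+2)))"
    unfolding corner_pts_def by simp
  note h = assms[unfolded corner_finite_def cp, simplified]
  show "corner P (2*k) = xf (P(k-2)) (P(k-1)) (P k) (P(k+1)) (P(k+1)) (P(k+2))"
    unfolding corner_def cp using chi_meet(1)[OF h] by simp
  show "D3 (P k) (P(k+1)) (P(k-2)) \<noteq> 0" "D3 (P(k+1)) (P(k+2)) (P(k-1)) \<noteq> 0"
    using chi_meet(2,3)[OF h] by auto
qed

lemma corner_odd:
  assumes "corner_finite P (2*k+1)"
  shows "corner P (2*k+1) = xf (P(k+2)) (P(k+1)) (P k) (P(k-1)) (P(k-1)) (P(k-2))"
    "D3 (P k) (P(k-1)) (P(k+2)) \<noteq> 0" "D3 (P(k-1)) (P(k-2)) (P(k+1)) \<noteq> 0"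
proof -
  have cp: "corner_pts P (2*k+1) = (P(k+2), P(k+1), meet (P(k+2)) (P(k+1)) (P k) (P(k-1)),
        meet (P(k+2)) (P(k+1)) (P(k-1)) (P(k-2)))"
    unfolding corner_pts_def by simp
  note h = assms[unfolded corner_finite_def cp, simplified]
  show "corner P (2*k+1) = xf (P(k+2)) (P(k+1)) (P k) (P(k-1)) (P(k-1)) (P(k-2))"
    unfolding corner_def cp using chi_meet(1)[OF h] by simp
  show "D3 (P k) (P(k-1)) (P(k+2)) \<noteq> 0" "D3 (P(k-1)) (P(k-2)) (P(k+1)) \<noteq> 0"
    using chi_meet(2,3)[OF h] by auto
qed

lemma poly3: fixes Dl a0 b0 c0 a2 b2 c2 a5 b5 c5 a6 b6 c6 :: real
 shows "(((dt a0 b0 c0 0 1 0 0 0 1 * Dl) * (dt a2 b2 c2 a5 b5 c5 1 0 0 * Dl) - (- (dt a0 b0 c0 0 1 0 1 0 0 * Dl)) * (- (dt a2 b2 c2 a5 b5 c5 0 0 1 * Dl))) * (- (dt 0 1 0 a6 b6 c6 0 0 1 * Dl))) * (((dt 0 1 0 0 0 1 1 0 0 * Dl) * (dt 0 0 1 a5 b5 c5 a2 b2 c2 * Dl) - (dt 0 1 0 0 0 1 a2 b2 c2 * Dl) * (dt 0 0 1 a5 b5 c5 1 0 0 * Dl)) * ((dt 0 1 0 a2 b2 c2 a5 b5 c5 * Dl) * (dt a2 b2 c2 1 0 0 0 0 1 * Dl) - (dt 0 1 0 a2 b2 c2 0 0 1 * Dl) * (dt a2 b2 c2 1 0 0 a5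 b5 c5 * Dl)) * ((dt 0 0 1 0 1 0 a6 b6 c6 * Dl) * (dt 0 1 0 a2 b2 c2 a5 b5 c5 * Dl)) * ((dt a2 b2 c2 0 1 0 a0 b0 c0 * Dl) * (dt 0 1 0 0 0 1 1 0 0 * Dl)) - (((dt 0 0 1 0 1 0 a6 b6 c6 * Dl) * (dt 0 1 0 a2 b2 c2 a5 b5 c5 * Dl)) - ((dt 0 0 1 0 1 0 a6 b6 c6 * Dl) * (dt 0 1 0 a2 b2 c2 a5 b5 c5 * Dl) - (dt 0 0 1 0 1 0 a5 b5 c5 * Dl) * (dt 0 1 0 a2 b2 c2 a6 b6 c6 * Dl))) * (((dt a2 b2 c2 0 1 0 a0 b0 c0 * Dl) * (dt 0 1 0 0 0 1 1 0 0 * Dl)) - ((dt a2 b2 c2 0 1 0 a0 b0 c0 * Dl) * (dt 0 1 0 0 0 1 1 0 0 * Dl) - (dt a2 b2 c2 0 1 0 1 0 0 * Dl) * (dt 0 1 0 0 0 1 a0 b0 c0 * Dl))) * ((dt 0 1 0 0 0 1 1 0 0 * Dl) * (dt 0 0 1 a5 b5 c5 a2 b2 c2 * Dl)) * ((dt 0 1 0 a2 b2 c2 a5 b5 c5 * Dl) * (dt a2 b2 c2 1 0 0 0 0 1 * Dl))) = (((dt a0 b0 c0 0 1 0 0 0 1 * Dl) * (dt 0 1 0 a6 b6 c6 1 0 0 * Dl) - (- (dt a0 b0 c0 0 1 0 1 0 0 * Dl)) * (- (dt 0 1 0 a6 b6 c6 0 0 1 * Dl))) * (- (dt a2 b2 c2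 a5 b5 c5 0 0 1 * Dl))) * (((dt 0 1 0 0 0 1 1 0 0 * Dl) * (dt 0 0 1 a5 b5 c5 a2 b2 c2 * Dl) - (dt 0 1 0 0 0 1 a2 b2 c2 * Dl) * (dt 0 0 1 a5 b5 c5 1 0 0 * Dl)) * ((dt 0 0 1 0 1 0 a6 b6 c6 * Dl) * (dt 0 1 0 a2 b2 c2 a5 b5 c5 * Dl)) * (((dt a2 b2 c2 0 1 0 a0 b0 c0 * Dl) * (dt 0 1 0 0 0 1 1 0 0 * Dl) - (dt a2 b2 c2 0 1 0 1 0 0 * Dl) * (dt 0 1 0 0 0 1 a0 b0 c0 * Dl)) * ((dt 0 1 0 a2 b2 c2 a5 b5 c5 * Dl) * (dt a2 b2 c2 1 0 0 0 0 1 * Dl)) + ((dt 0 1 0 a2 b2 c2 a5 b5 c5 * Dl) * (dt a2 b2 c2 1 0 0 0 0 1 * Dl) - (dt 0 1 0 a2 b2 c2 0 0 1 * Dl) * (dt a2 b2 c2 1 0 0 a5 b5 c5 * Dl)) * ((dt a2 b2 c2 0 1 0 a0 b0 c0 * Dl) * (dt 0 1 0 0 0 1 1 0 0 * Dl)) - ((dt a2 b2 c2 0 1 0 a0 b0 c0 * Dl) * (dt 0 1 0 0 0 1 1 0 0 * Dl)) * ((dt 0 1 0 a2 b2 c2 a5 b5 c5 * Dl) * (dt a2 b2 c2 1 0 0 0 0 1 * Dl))))"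
  unfolding dt_def by algebra

lemma polyD3: fixes QA QB QC QD QE QF QG :: "real^3"
  assumes nd: "D3 QB QD QE \<noteq> 0"
  shows "((D3 QA QD QE * D3 QC QF QB - (- D3 QA QD QB) * (- D3 QC QF QE)) * (- D3 QD QG QE)) * ((D3 QD QE QB * D3 QE QF QC - D3 QD QE QC * D3 QE QF QB) * (D3 QD QC QF * D3 QC QB QE - D3 QD QC QE * D3 QC QB QF) * (D3 QE QD QG * D3 QD QC QF) * (D3 QC QD QA * D3 QD QE QB) - ((D3 QE QD QG * D3 QD QC QF) - (D3 QE QD QG * D3 QD QC QF - D3 QE QD QF * D3 QD QC QG)) * ((D3 QC QD QA * D3 QD QE QB) - (D3 QC QD QA * D3 QD QE QB - D3 QC QD QB * D3 QD QE QA)) * (D3 QD QE QB * D3 QE QF QC) * (D3 QD QC QF * D3 QC QB QE)) = ((D3 QA QD QE * D3 QD QG QB - (- D3 QA QD QB) * (- D3 QD QG QE)) * (- D3 QC QF QE)) * ((D3 QD QE QB * D3 QE QF QC - D3 QD QE QC * D3 QE QF QB) * (D3 QE QD QG * D3 QD QC QF) * ((D3 QC QD QA * D3 QD QE QB - D3 QC QD QB * D3 QD QE QA) * (D3 QD QC QF * D3 QC QB QE) + (D3 QD QC QF * D3 QC QB QE - D3 QD QC QE * D3 QC QB QF) * (D3 QC QD QA * D3 QD QE QB) - (D3 QC QD QA * D3 QD QE QB) * (D3 QD QC QF * D3 QC QB QE)))"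
proof -
  define Dl where "Dl = D3 QB QD QE"
  have h1: "QB = 1 *\<^sub>R QB + 0 *\<^sub>R QD + 0 *\<^sub>R QE" by simp
  have h3: "QD = 0 *\<^sub>R QB + 1 *\<^sub>R QD + 0 *\<^sub>R QE" by simp
  have h4: "QE = 0 *\<^sub>R QB + 0 *\<^sub>R QD + 1 *\<^sub>R QE" by simp
  obtain a0 b0 c0 where h0: "QA = a0 *\<^sub>R QB + b0 *\<^sub>R QD + c0 *\<^sub>R QE" using cramer[OF nd, of QA] by blast
  obtain a2 b2 c2 where h2: "QC = a2 *\<^sub>R QB + b2 *\<^sub>R QD + c2 *\<^sub>R QE" using cramer[OF nd, of QC] by blast
  obtain a5 b5 c5 where h5: "QF = a5 *\<^sub>R QB + b5 *\<^sub>R QD + c5 *\<^sub>R QE" using cramer[OF nd, of QF] by blast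
  obtain a6 b6 c6 where h6: "QG = a6 *\<^sub>R QB + b6 *\<^sub>R QD + c6 *\<^sub>R QE" using cramer[OF nd, of QG] by blast
  have e031: "D3 QA QD QB = dt a0 b0 c0 0 1 0 1 0 0 * Dl" unfolding Dl_def by (rule D3_comb[OF h0 h3 h1])
  have e034: "D3 QA QD QE = dt a0 b0 c0 0 1 0 0 0 1 * Dl" unfolding Dl_def by (rule D3_comb[OF h0 h3 h4])
  have e214: "D3 QC QB QE = dt a2 b2 c2 1 0 0 0 0 1 * Dl" unfolding Dl_def by (rule D3_comb[OF h2 h1 h4])
  have e215: "D3 QC QB QF = dt a2 b2 c2 1 0 0 a5 b5 c5 * Dl" unfolding Dl_def by (rule D3_comb[OF h2 h1 h5])
  have e230: "D3 QC QD QA = dt a2 b2 c2 0 1 0 a0 b0 c0 * Dl" unfolding Dl_def by (rule D3_comb[OF h2 h3 h0])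
  have e231: "D3 QC QD QB = dt a2 b2 c2 0 1 0 1 0 0 * Dl" unfolding Dl_def by (rule D3_comb[OF h2 h3 h1])
  have e251: "D3 QC QF QB = dt a2 b2 c2 a5 b5 c5 1 0 0 * Dl" unfolding Dl_def by (rule D3_comb[OF h2 h5 h1])
  have e254: "D3 QC QF QE = dt a2 b2 c2 a5 b5 c5 0 0 1 * Dl" unfolding Dl_def by (rule D3_comb[OF h2 h5 h4])
  have e324: "D3 QD QC QE = dt 0 1 0 a2 b2 c2 0 0 1 * Dl" unfolding Dl_def by (rule D3_comb[OF h3 h2 h4])
  have e325: "D3 QD QC QF = dt 0 1 0 a2 b2 c2 a5 b5 c5 * Dl" unfolding Dl_def by (rule D3_comb[OF h3 h2 h5])
  have e326: "D3 QD QC QG = dt 0 1 0 a2 b2 c2 a6 b6 c6 * Dl" unfolding Dl_def by (rule D3_comb[OF h3 h2 h6])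
  have e340: "D3 QD QE QA = dt 0 1 0 0 0 1 a0 b0 c0 * Dl" unfolding Dl_def by (rule D3_comb[OF h3 h4 h0])
  have e341: "D3 QD QE QB = dt 0 1 0 0 0 1 1 0 0 * Dl" unfolding Dl_def by (rule D3_comb[OF h3 h4 h1])
  have e342: "D3 QD QE QC = dt 0 1 0 0 0 1 a2 b2 c2 * Dl" unfolding Dl_def by (rule D3_comb[OF h3 h4 h2])
  have e361: "D3 QD QG QB = dt 0 1 0 a6 b6 c6 1 0 0 * Dl" unfolding Dl_def by (rule D3_comb[OF h3 h6 h1])
  have e364: "D3 QD QG QE = dt 0 1 0 a6 b6 c6 0 0 1 * Dl" unfolding Dl_def by (rule D3_comb[OF h3 h6 h4])
  have e435: "D3 QE QD QF = dt 0 0 1 0 1 0 a5 b5 c5 * Dl" unfolding Dl_def by (rule D3_comb[OF h4 h3 h5])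
  have e436: "D3 QE QD QG = dt 0 0 1 0 1 0 a6 b6 c6 * Dl" unfolding Dl_def by (rule D3_comb[OF h4 h3 h6])
  have e451: "D3 QE QF QB = dt 0 0 1 a5 b5 c5 1 0 0 * Dl" unfolding Dl_def by (rule D3_comb[OF h4 h5 h1])
  have e452: "D3 QE QF QC = dt 0 0 1 a5 b5 c5 a2 b2 c2 * Dl" unfolding Dl_def by (rule D3_comb[OF h4 h5 h2])
  show ?thesis unfolding e031 e034 e214 e215 e230 e231 e251 e254 e324 e325 e326 e340 e341 e342 e361 e364 e435 e436 e451 e452 by (rule poly3)
qed

lemma rat_step:
  fixes N2 D2 N4 D4 N1 D1 Np Dp L1 L2 :: real
  assumes "D2 \<noteq> 0" "D4 \<noteq> 0" "D1 \<noteq> 0" "Dp \<noteq> 0" "L2 \<noteq> 0"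
    "N2 / D2 * (N1 / D1) - (1 - Np / Dp) * (1 - N4 / D4) \<noteq> 0"
    "L1 * (N2 * N1 * Dp * D4 - (Dp - Np) * (D4 - N4) * D2 * D1) = L2 * (N2 * Dp * (N4 * D1 + N1 * D4 - D4 * D1))"
  shows "L1 / L2 = N2 / D2 * (N4 / D4 + N1 / D1 - 1) / (N2 / D2 * (N1 / D1) - (1 - Np / Dp) * (1 - N4 / D4))"
proof -
  have e: "N2 / D2 * (N1 / D1) - (1 - Np / Dp) * (1 - N4 / D4) = (N2 * N1 * Dp * D4 - (Dp - Np) * (D4 - N4) * D2 * D1) / (D2*D1*Dp*D4)"
    using assms by (simp add: field_simps)
  have e2: "N2 / D2 * (N4 / D4 + N1 / D1 - 1) = (N2 * Dp * (N4 * D1 + N1 * D4 - D4 * D1)) / (D2*D1*Dp*D4)"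
    using assms by (simp add: field_simps)
  have nz: "N2 * N1 * Dp * D4 - (Dp - Np) * (D4 - N4) * D2 * D1 \<noteq> 0" using assms(6) unfolding e by simp
  have Z: "D2*D1*Dp*D4 \<noteq> 0" using assms(1-4) by simp
  have f1: "(N2 * Dp * (N4 * D1 + N1 * D4 - D4 * D1)) / (D2*D1*Dp*D4) / ((N2 * N1 * Dp * D4 - (Dp - Np) * (D4 - N4) * D2 * D1) / (D2*D1*Dp*D4))
      = (N2 * Dp * (N4 * D1 + N1 * D4 - D4 * D1)) / (N2 * N1 * Dp * D4 - (Dp - Np) * (D4 - N4) * D2 * D1)"
    using Z by simp
  have f2: "L1 / L2 = (N2 * Dp * (N4 * D1 + N1 * D4 - D4 * D1)) / (N2 * N1 * Dp * D4 - (Dp - Np) * (D4 - N4) * D2 * D1)"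
    using assms(5) nz assms(7) by (simp add: frac_eq_eq mult.commute)
  show ?thesis unfolding e e2 f1 by (rule f2)
qed

lemma ratio2:
  fixes a1 a2 b1 b2 c1 c2 k d n :: real
  assumes "(a1*(k*c2) - a2*(k*c1))*(b1*d - b2*0)*n \<noteq> 0"
  shows "(a1*b2-a2*b1)*((k*c1)*d - (k*c2)*0)*n / ((a1*(k*c2)-a2*(k*c1))*(b1*d-b2*0)*n)
      = ((a1*b2-a2*b1)*c1)/((a1*c2-a2*c1)*b1)"
    "(a1*c2-a2*c1)*b1 \<noteq> 0"
proof -
  have e1: "(a1*b2-a2*b1)*((k*c1)*d - (k*c2)*0)*n = ((a1*b2-a2*b1)*c1)*(k*d*n)" by (simp add: algebra_simps)
  have e2: "(a1*(k*c2)-a2*(k*c1))*(b1*d-b2*0)*n = ((a1*c2-a2*c1)*b1)*(k*d*n)" by (simp add: algebra_simps)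
  from assms have nz: "k*d*n \<noteq> 0" "(a1*c2-a2*c1)*b1 \<noteq> 0" unfolding e2 by auto
  show "(a1*c2-a2*c1)*b1 \<noteq> 0" by (rule nz(2))
  show "(a1*b2-a2*b1)*((k*c1)*d - (k*c2)*0)*n / ((a1*(k*c2)-a2*(k*c1))*(b1*d-b2*0)*n)
      = ((a1*b2-a2*b1)*c1)/((a1*c2-a2*c1)*b1)"
    unfolding e1 e2 using nz(1) by (rule mult_divide_mult_cancel_right)
qed

lemma even_case:
  fixes P :: "int \<Rightarrow> real^3" and i :: int
  assumes nd: "D3 (P(i-3)) (P(i-1)) (P i) \<noteq> 0"
   and fT: "corner_finite (T3 P) (2*i)"
   and f4: "corner_finite P (2*i-4)" and f2: "corner_finite P (2*i-2)"
   and f1: "corner_finite P (2*i-1)" and fp: "corner_finite P (2*i+1)"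
   and dn: "corner P (2*i-2) * corner P (2*i-1) - (1 - corner P (2*i+1)) * (1 - corner P (2*i-4)) \<noteq> 0"
  shows "corner (T3 P) (2*i) = corner P (2*i-2) * (corner P (2*i-4) + corner P (2*i-1) - 1) /
           (corner P (2*i-2) * corner P (2*i-1) - (1 - corner P (2*i+1)) * (1 - corner P (2*i-4)))"
proof -
  have idx: "i-1-2 = i-3" "i-1-1 = i-2" "i-1+1 = i" "i-1+2 = i+1" "2*(i-1) = 2*i-2"
    "i-2-2 = i-4" "i-2-1 = i-3" "i-2+1 = i-1" "i-2+2 = i" "2*(i-2) = 2*i-4"
    "2*i-2+1 = 2*i-1" by simp_all
  note c2 = corner_even[of P "i-1", unfolded idx, OF f2]
  note c4 = corner_even[of P "i-2", unfolded idx, OF f4]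
  note c1 = corner_odd[of P "i-1", unfolded idx, OF f1]
  note cp = corner_odd[of P i, OF fp]
  have tidx: "i-2-2 = i-4" "i-2+1 = i-1" "i-2-1 = i-3" "i-2+2 = i"
     "i-1-2 = i-3" "i-1+1 = i" "i-1-1 = i-2" "i-1+2 = i+1"
     "i+1-2 = i-1" "i+1+1 = i+2" "i+1-1 = i" "i+1+2 = i+3"
     "i+2-2 = i" "i+2+1 = i+3" "i+2-1 = i+1" "i+2+2 = i+4" by simp_all
  define a1 where "a1 = D3 (P(i-4)) (P(i-1)) (P i)"
  define a2 where "a2 = - D3 (P(i-4)) (P(i-1)) (P(i-3))"
  define b1 where "b1 = - D3 (P(i-2)) (P(i+1)) (P i)"
  define b2 where "b2 = D3 (P(i-2)) (P(i+1)) (P(i-3))"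
  define s where "s = a1*b2 - a2*b1"
  define t where "t = D3 (P(i-2)) (P(i+1)) (P(i+2)) * D3 (P i) (P(i+3)) (P(i-1)) - (- D3 (P(i-2)) (P(i+1)) (P(i-1))) * (- D3 (P i) (P(i+3)) (P(i+2)))"
  define t' where "t' = D3 (P(i-1)) (P(i+2)) (P(i+3)) * D3 (P(i+1)) (P(i+4)) (P i) - (- D3 (P(i-1)) (P(i+2)) (P i)) * (- D3 (P(i+1)) (P(i+4)) (P(i+3)))"
  have TA: "T3 P (i-2) = a1 *\<^sub>R P(i-3) + a2 *\<^sub>R P i"
    unfolding T3_def tidx a1_def a2_def meet_eq2 by simp
  have TB: "T3 P (i-1) = b1 *\<^sub>R P(i-3) + b2 *\<^sub>R P i"
    unfolding T3_def tidx b1_def b2_def meet_eq1 by simp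
  have TI: "T3 P i = D3 (P(i-2)) (P(i+1)) (P(i+2)) *\<^sub>R P(i-1) + (- D3 (P(i-2)) (P(i+1)) (P(i-1))) *\<^sub>R P(i+2)"
    unfolding T3_def meet_eq2 by simp
  have TI1a: "T3 P (i+1) = (- D3 (P i) (P(i+3)) (P(i+2))) *\<^sub>R P(i-1) + D3 (P i) (P(i+3)) (P(i-1)) *\<^sub>R P(i+2)"
    unfolding T3_def tidx meet_eq1 by simp
  have TI1b: "T3 P (i+1) = D3 (P(i-1)) (P(i+2)) (P(i+3)) *\<^sub>R P i + (- D3 (P(i-1)) (P(i+2)) (P i)) *\<^sub>R P(i+3)"
    unfolding T3_def tidx meet_eq2 by simp
  have TI2: "T3 P (i+2) = (- D3 (P(i+1)) (P(i+4)) (P(i+3))) *\<^sub>R P i + D3 (P(i+1)) (P(i+4)) (P i) *\<^sub>R P(i+3)"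
    unfolding T3_def tidx meet_eq1 by simp
  have crAB: "cross3 (T3 P (i-2)) (T3 P (i-1)) = s *\<^sub>R cross3 (P(i-3)) (P i)"
    unfolding TA TB cross_comb s_def ..
  have crC: "cross3 (T3 P i) (T3 P (i+1)) = t *\<^sub>R cross3 (P(i-1)) (P(i+2))"
    unfolding TI TI1a cross_comb t_def ..
  have crD: "cross3 (T3 P (i+1)) (T3 P (i+2)) = t' *\<^sub>R cross3 (P i) (P(i+3))"
    unfolding TI1b TI2 cross_comb t'_def ..
  have MC: "meet (T3 P (i-2)) (T3 P (i-1)) (T3 P i) (T3 P (i+1))
     = ((s*t) * (- D3 (P(i-1)) (P(i+2)) (P i))) *\<^sub>R P(i-3) + ((s*t) * D3 (P(i-1)) (P(i+2)) (P(i-3))) *\<^sub>R P i"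
  proof -
    have "meet (T3 P (i-2)) (T3 P (i-1)) (T3 P i) (T3 P (i+1)) = (s*t) *\<^sub>R meet (P(i-3)) (P i) (P(i-1)) (P(i+2))"
      unfolding meet_def line_through_def crAB crC by (simp add: cross_mult_left cross_mult_right)
    then show ?thesis unfolding meet_eq1 by (simp add: algebra_simps)
  qed
  have D00: "D3 (P i) (P(i+3)) (P i) = 0" unfolding D3_def by (simp add: dot_cross_self)
  have MD: "meet (T3 P (i-2)) (T3 P (i-1)) (T3 P (i+1)) (T3 P (i+2))
     = 0 *\<^sub>R P(i-3) + (s*t'*D3 (P i) (P(i+3)) (P(i-3))) *\<^sub>R P i"
  proof -
    have "meet (T3 P (i-2)) (T3 P (i-1)) (T3 P (i+1)) (T3 P (i+2)) = (s*t') *\<^sub>R meet (P(i-3)) (P i) (P i) (P(i+3))"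
      unfolding meet_def line_through_def crAB crD by (simp add: cross_mult_left cross_mult_right)
    then show ?thesis unfolding meet_eq1 D00 by simp
  qed
  have cpT: "corner_pts (T3 P) (2*i) = (T3 P (i-2), T3 P (i-1),
      meet (T3 P (i-2)) (T3 P (i-1)) (T3 P i) (T3 P (i+1)),
      meet (T3 P (i-2)) (T3 P (i-1)) (T3 P (i+1)) (T3 P (i+2)))"
    unfolding corner_pts_def by simp
  note cc = chi_comb[OF TA TB MC MD]
  have denT: "chi_den (T3 P (i-2)) (T3 P (i-1)) (meet (T3 P (i-2)) (T3 P (i-1)) (T3 P i) (T3 P (i+1)))
       (meet (T3 P (i-2)) (T3 P (i-1)) (T3 P (i+1)) (T3 P (i+2))) \<noteq> 0"
    using fT unfolding corner_finite_def cpT by simp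
  note r2 = ratio2[OF denT[unfolded cc]]
  have LHS: "corner (T3 P) (2*i) = ((a1*b2-a2*b1)*(- D3 (P(i-1)) (P(i+2)) (P i))) /
     ((a1*D3 (P(i-1)) (P(i+2)) (P(i-3)) - a2*(- D3 (P(i-1)) (P(i+2)) (P i)))*b1)"
    unfolding corner_def cpT prod.case chi_def cc by (rule r2(1))
  show ?thesis
    unfolding LHS c2(1) c4(1) c1(1) cp(1)
    unfolding xf_def a1_def a2_def b1_def b2_def
    apply (rule rat_step)
    using c2(2,3) apply simp
    using c4(2,3) apply simp
    using c1(2,3) apply simp
    using cp(2,3) apply simp
    using r2(2) unfolding a1_def a2_def b1_def b2_def apply simp
    using dn unfolding c2(1) c4(1) c1(1) cp(1) xf_def apply simp
    by (rule polyD3[OF nd])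
qed

lemma D3_perm: "D3 a b c = D3 b c a" "D3 a c b = - D3 a b c" "D3 c b a = - D3 a b c"
  unfolding D3_def by (simp_all add: cross3_simps)

lemma refl_pts: "corner_pts (\<lambda>k. R (-k)) j = corner_pts R (1-j)"
proof (cases "even j")
  case True
  then obtain k where j: "j = 2*k" by (metis evenE)
  have a: "(1 - 2*k) div 2 = -k" "\<not> even (1 - 2*k)" by presburger+
  have i: "-(k-2) = -k+2" "-(k-1) = -k+1" "-(k+1) = -k-1" "-(k+2) = -k-2" by simp_all
  show ?thesis unfolding j corner_pts_def Let_def a by (simp add: i)
next
  case False
  then obtain k where j: "j = 2*k+1" by (metis oddE)
  have a: "(1 - (2*k+1)) div 2 = -k" "even (1 - (2*k+1))" "(2*k+1) div 2 = k" by presburger+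
  have i: "-(k-2) = -k+2" "-(k-1) = -k+1" "-(k+1) = -k-1" "-(k+2) = -k-2" by simp_all
  show ?thesis unfolding j corner_pts_def Let_def a using False j by (simp add: i)
qed

lemma meet_neg: "meet (-a) (-b) (-c) (-d) = meet a b c d"
  unfolding meet_def line_through_def by simp

lemma neg_pts: "corner_pts (\<lambda>k. - R k) j = (case corner_pts R j of (A,B,C,D) \<Rightarrow> (-A,-B,C,D))"
  unfolding corner_pts_def Let_def by (simp add: meet_neg)

lemma neg_corner: "corner (\<lambda>k. - R k) j = corner R j" "corner_finite (\<lambda>k. - R k) j = corner_finite R j"
  unfolding corner_def corner_finite_def neg_pts
  by (simp_all split: prod.splits add: chi_def chi_num_def chi_den_def)

lemma T3_refl: "T3 (\<lambda>k. P (-k)) = (\<lambda>k. - T3 P (-k))"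
proof
  fix k :: int
  have i: "-(k-2) = -k+2" "-(k-1) = -k+1" "-(k+1) = -k-1" "-(k+2) = -k-2" by simp_all
  show "T3 (\<lambda>k. P (-k)) k = - T3 P (-k)"
    unfolding T3_def meet_def line_through_def
    apply (simp only: i)
    apply (subst cross_skew[of "P (-k+2)"], subst cross_skew[of "P (-k+1)"])
    apply (simp only: cross_minus_left cross_minus_right minus_minus)
    by (rule cross_skew)
qed

lemma refl_corner: "corner (\<lambda>k. R (-k)) j = corner R (1-j)" "corner_finite (\<lambda>k. R (-k)) j = corner_finite R (1-j)"
  unfolding corner_def corner_finite_def refl_pts by simp_all

lemma T3_refl_corner: "corner (T3 (\<lambda>k. P (-k))) j = corner (T3 P) (1-j)"
  "corner_finite (T3 (\<lambda>k. P (-k))) j = corner_finite (T3 P) (1-j)"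
proof -
  have "corner (T3 (\<lambda>k. P (-k))) j = corner (\<lambda>k. T3 P (-k)) j"
    unfolding T3_refl by (rule neg_corner(1)[where R="\<lambda>k. T3 P (-k)"])
  then show "corner (T3 (\<lambda>k. P (-k))) j = corner (T3 P) (1-j)" using refl_corner(1) by simp
  have "corner_finite (T3 (\<lambda>k. P (-k))) j = corner_finite (\<lambda>k. T3 P (-k)) j"
    unfolding T3_refl by (rule neg_corner(2)[where R="\<lambda>k. T3 P (-k)"])
  then show "corner_finite (T3 (\<lambda>k. P (-k))) j = corner_finite (T3 P) (1-j)" using refl_corner(2) by simp
qed

theorem mainTheorem15:
  fixes n :: nat and P :: "int \<Rightarrow> real^3" and i :: int
  assumes "twisted_ngon n P" and "three_nice P"
  defines "x \<equiv> corner P" and "x' \<equiv> corner (T3 P)"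
  shows "(corner_finite (T3 P) (2*i) \<and>
          (\<forall>j \<in> {2*i-4, 2*i-2, 2*i-1, 2*i+1}. corner_finite P j) \<and>
          x (2*i-2) * x (2*i-1) - (1 - x (2*i+1)) * (1 - x (2*i-4)) \<noteq> 0
          \<longrightarrow> x' (2*i) = x (2*i-2) * (x (2*i-4) + x (2*i-1) - 1) /
                 (x (2*i-2) * x (2*i-1) - (1 - x (2*i+1)) * (1 - x (2*i-4))))
       \<and> (corner_finite (T3 P) (2*i+1) \<and>
          (\<forall>j \<in> {2*i, 2*i+2, 2*i+3, 2*i+5}. corner_finite P j) \<and>
          x (2*i+2) * x (2*i+3) - (1 - x (2*i+5)) * (1 - x (2*i)) \<noteq> 0
          \<longrightarrow> x' (2*i+1) = x (2*i+3) * (x (2*i+2) + x (2*i+5) - 1) /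
                 (x (2*i+2) * x (2*i+3) - (1 - x (2*i+5)) * (1 - x (2*i))))"
proof (intro conjI impI)
  assume h: "corner_finite (T3 P) (2*i) \<and>
          (\<forall>j \<in> {2*i-4, 2*i-2, 2*i-1, 2*i+1}. corner_finite P j) \<and>
          x (2*i-2) * x (2*i-1) - (1 - x (2*i+1)) * (1 - x (2*i-4)) \<noteq> 0"
  have gp: "general_position4 (P (i-4)) (P (i-4+1)) (P (i-4+3)) (P (i-4+4))"
    using assms(2) unfolding three_nice_def by blast
  have nd: "D3 (P(i-3)) (P(i-1)) (P i) \<noteq> 0"
    using gp unfolding general_position4_def proj_collinear_def D3_def by simp
  show "x' (2*i) = x (2*i-2) * (x (2*i-4) + x (2*i-1) - 1) /
                 (x (2*i-2) * x (2*i-1) - (1 - x (2*i+1)) * (1 - x (2*i-4)))"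
    unfolding x_def x'_def
    by (rule even_case[OF nd]) (use h in \<open>simp_all add: x_def\<close>)
next
  assume h: "corner_finite (T3 P) (2*i+1) \<and>
          (\<forall>j \<in> {2*i, 2*i+2, 2*i+3, 2*i+5}. corner_finite P j) \<and>
          x (2*i+2) * x (2*i+3) - (1 - x (2*i+5)) * (1 - x (2*i)) \<noteq> 0"
  define Q where "Q = (\<lambda>k. P (-k))"
  have gp: "general_position4 (P i) (P (i+1)) (P (i+3)) (P (i+4))"
    using assms(2) unfolding three_nice_def by blast
  have nd0: "D3 (P i) (P(i+1)) (P (i+3)) \<noteq> 0"
    using gp unfolding general_position4_def proj_collinear_def D3_def by simp
  have nd: "D3 (Q(-i-3)) (Q(-i-1)) (Q (-i)) \<noteq> 0"
  proof -
    have "D3 (P(i+3)) (P(i+1)) (P i) = - D3 (P i) (P(i+1)) (P(i+3))" by (rule D3_perm(3))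
    moreover have "Q(-i-3) = P(i+3)" "Q(-i-1) = P(i+1)" "Q(-i) = P i" unfolding Q_def by (simp_all add: add.commute)
    ultimately show ?thesis using nd0 by simp
  qed
  have idx: "1 - 2 * - i = 2*i+1" "1 - (2 * - i - 2) = 2*i+3" "1 - (2 * - i - 4) = 2*i+5"
     "1 - (2 * - i - 1) = 2*i+2" "1 - (2 * - i + 1) = 2*i" by simp_all
  have e: "corner (T3 Q) (2 * - i) = corner Q (2 * - i - 2) * (corner Q (2 * - i - 4) + corner Q (2 * - i - 1) - 1) /
           (corner Q (2 * - i - 2) * corner Q (2 * - i - 1) - (1 - corner Q (2 * - i + 1)) * (1 - corner Q (2 * - i - 4)))"
    by (rule even_case[OF nd]) (use h in \<open>simp_all add: Q_def refl_corner T3_refl_corner idx x_def add.commute mult.commute\<close>)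
  show "x' (2*i+1) = x (2*i+3) * (x (2*i+2) + x (2*i+5) - 1) /
                 (x (2*i+2) * x (2*i+3) - (1 - x (2*i+5)) * (1 - x (2*i)))"
    using e unfolding Q_def refl_corner T3_refl_corner idx x_def x'_def by (simp add: algebra_simps)
qed

end
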